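(* Let $n=3$ and let $M$ be a Griffiths positive $2\times 2$ matrix of constant coefficient $(1,1)$-forms on $\mathbb{C}^3$. Let $\Omega=\det(M)$, a real $(2,2)$-form. Define a Hermitian form on $V^{1,0}$ by $Q(\alpha,\beta)=\sqrt{-1}\star(\alpha\wedge\overline{\beta}\wedge\Omega)$. Then $Q$ is positive definite on $V^{1,0}$.
   Context: $V^{p,q}$ is the space of constant coefficient $(p,q)$-forms on $\mathbb{C}^n$. A $(1,1)$-form is Kähler if it equals $\sum_l\frac{\sqrt{-1}}{2}dw_l\wedge d\overline{w_l}$ in some complex linear coordinates. A matrix $M=(\alpha_{i,j})$ of $(1,1)$-forms with $\alpha_{i,j}=\overline{\alpha_{j,i}}$ is Griffiths positive if $\sum_{i,j}\theta_i\alpha_{i,j}\overline{\theta_j}$ is Kähler for all nonzero $\theta$; $\det(M)=\alpha_{1,1}\wedge\alpha_{2,2}-\alpha_{1,2}\wedge\alpha_{2,1}$. $\star:V^{3,3}\to\mathbb{C}$ denotes the Hodge star on top-degree forms: $\eta=\star(\eta)\,\mathrm{Vol}$, where $\mathrm{Vol}=\bigwedge_{l=1}^3\frac{\sqrt{-1}}{2}dz_l\wedge d\overline{z_l}$ for fixed complex linear coordinates $(z_1,z_2,z_3)$ (the sign of $\star$ does not depend on this choice). *)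

theory Defs
  imports Complex_Main
begin

text \<open>The exterior algebra is generated by the six covectors
  e_0,e_1,e_2 = dz_1,dz_2,dz_3 and e_3,e_4,e_5 = d(zbar_1),d(zbar_2),d(zbar_3).
  A form is its coefficient function on index sets S (the coefficient of the
  increasingly ordered monomial e_S).\<close>

type_synonym form = "nat set \<Rightarrow> complex"

definition form_zero :: form where "form_zero = (\<lambda>S. 0)"
definition form_add :: "form \<Rightarrow> form \<Rightarrow> form" where
  "form_add f g = (\<lambda>S. f S + g S)"
definition form_diff :: "form \<Rightarrow> form \<Rightarrow> form" where
  "form_diff f g = (\<lambda>S. f S - g S)"
definition form_smult :: "complex \<Rightarrow> form \<Rightarrow> form" where
  "form_smult c f = (\<lambda>S. c * f S)"
definition form_sum :: "(nat \<Rightarrow> form) \<Rightarrow> nat set \<Rightarrow> form" where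
  "form_sum F I = (\<lambda>S. \<Sum>l\<in>I. F l S)"

definition is_pq :: "nat \<Rightarrow> nat \<Rightarrow> form \<Rightarrow> bool" where
  "is_pq p q f \<longleftrightarrow> (\<forall>S. f S \<noteq> 0 \<longrightarrow>
      S \<subseteq> {..<6} \<and> card (S \<inter> {..<3}) = p \<and> card (S \<inter> {3..<6}) = q)"

definition shuffle_sign :: "nat set \<Rightarrow> nat set \<Rightarrow> complex" where
  "shuffle_sign A B = (-1) ^ card {(a,b). a \<in> A \<and> b \<in> B \<and> b < a}"

definition wedge :: "form \<Rightarrow> form \<Rightarrow> form" where
  "wedge f g = (\<lambda>S. \<Sum>A\<in>Pow S. shuffle_sign A (S - A) * f A * g (S - A))"

definition gen :: "nat \<Rightarrow> form" where
  "gen i = (\<lambda>S. if S = {i} then 1 else 0)"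

definition dz :: "nat \<Rightarrow> form" where "dz j = gen j"
definition dzbar :: "nat \<Rightarrow> form" where "dzbar j = gen (j + 3)"

text \<open>Complex conjugation: antilinear, sends dz_j to d(zbar_j) and back, and is
  multiplicative for the wedge product.  csw swaps the index j with j+3.\<close>
definition csw :: "nat \<Rightarrow> nat" where
  "csw i = (if i < 3 then i + 3 else if i < 6 then i - 3 else i)"

definition conj_form :: "form \<Rightarrow> form" where
  "conj_form f = (\<lambda>T. (-1) ^ card {(a,b). a \<in> csw ` T \<and> b \<in> csw ` T \<and> a < b \<and> csw b < csw a}
                       * cnj (f (csw ` T)))"

definition Vol :: form where
  "Vol = wedge (form_smult (\<i>/2) (wedge (dz 0) (dzbar 0)))
          (wedge (form_smult (\<i>/2) (wedge (dz 1) (dzbar 1)))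
                 (form_smult (\<i>/2) (wedge (dz 2) (dzbar 2))))"

definition star :: "form \<Rightarrow> complex" where
  "star \<eta> = \<eta> {..<6} / Vol {..<6}"

definition kahler :: "form \<Rightarrow> bool" where
  "kahler a \<longleftrightarrow> (\<exists>w :: nat \<Rightarrow> form.
      (\<forall>l<3. is_pq 1 0 (w l)) \<and>
      (\<forall>c :: nat \<Rightarrow> complex. form_sum (\<lambda>l. form_smult (c l) (w l)) {..<3} = form_zero
                            \<longrightarrow> (\<forall>l<3. c l = 0)) \<and>
      a = form_sum (\<lambda>l. form_smult (\<i>/2) (wedge (w l) (conj_form (w l)))) {..<3})"

definition griffiths_positive :: "(nat \<Rightarrow> nat \<Rightarrow> form) \<Rightarrow> bool" where
  "griffiths_positive M \<longleftrightarrow>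
     (\<forall>i<2. \<forall>j<2. M i j = conj_form (M j i)) \<and>
     (\<forall>\<theta> :: nat \<Rightarrow> complex. (\<theta> 0 \<noteq> 0 \<or> \<theta> 1 \<noteq> 0) \<longrightarrow>
        kahler (form_sum (\<lambda>i. form_sum (\<lambda>j. form_smult (\<theta> i * cnj (\<theta> j)) (M i j)) {..<2}) {..<2}))"

definition det2 :: "(nat \<Rightarrow> nat \<Rightarrow> form) \<Rightarrow> form" where
  "det2 M = form_diff (wedge (M 0 0) (M 1 1)) (wedge (M 0 1) (M 1 0))"

definition hermQ :: "form \<Rightarrow> form \<Rightarrow> form \<Rightarrow> complex" where
  "hermQ \<Omega> a b = \<i> * star (wedge (wedge a (conj_form b)) \<Omega>)"

end

theory Submission
  imports Defs
begin

lemma sum_Pow_insert: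
  assumes "x \<notin> A" "finite A"
  shows "(\<Sum>B\<in>Pow (insert x A). F B) = (\<Sum>B\<in>Pow A. F B) + (\<Sum>B\<in>Pow A. F (insert x B))"
proof -
  have d: "Pow A \<inter> insert x ` Pow A = {}" using assms by auto
  have i: "inj_on (insert x) (Pow A)" using assms unfolding inj_on_def by auto
  have "(\<Sum>B\<in>Pow (insert x A). F B) = (\<Sum>B\<in>Pow A \<union> insert x ` Pow A. F B)"
    by (simp add: Pow_insert)
  also have "\<dots> = (\<Sum>B\<in>Pow A. F B) + (\<Sum>B\<in>insert x ` Pow A. F B)"
    by (rule sum.union_disjoint) (use assms d in auto)
  also have "(\<Sum>B\<in>insert x ` Pow A. F B) = (\<Sum>B\<in>Pow A. F (insert x B))"
    by (rule sum.reindex_cong[OF i]) auto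
  finally show ?thesis .
qed

lemma sum_Pow_empty: "(\<Sum>B\<in>Pow {}. F B) = F {}" by simp

lemma shuffle_sign_ins: "finite B \<Longrightarrow> a \<notin> A \<Longrightarrow> finite A \<Longrightarrow>
  shuffle_sign (insert a A) B = (-1) ^ card {b\<in>B. b < a} * shuffle_sign A B"
proof -
  assume f: "finite B" "a \<notin> A" "finite A"
  have e: "{(x,y). x \<in> insert a A \<and> y \<in> B \<and> y < x} =
     (\<lambda>y. (a,y)) ` {b\<in>B. b < a} \<union> {(x,y). x \<in> A \<and> y \<in> B \<and> y < x}" by auto
  have fin: "finite {(x,y). x \<in> A \<and> y \<in> B \<and> y < x}"
    by (rule finite_subset[of _ "A \<times> B"]) (use f in auto)
  have "card {(x,y). x \<in> insert a A \<and> y \<in> B \<and> y < x} =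
     card ((\<lambda>y. (a,y)) ` {b\<in>B. b < a}) + card {(x,y). x \<in> A \<and> y \<in> B \<and> y < x}"
    unfolding e by (rule card_Un_disjoint) (use f fin in auto)
  also have "card ((\<lambda>y. (a,y)) ` {b\<in>B. b < a}) = card {b\<in>B. b < a}"
    by (rule card_image) (auto simp: inj_on_def)
  finally show ?thesis unfolding shuffle_sign_def by (simp add: power_add)
qed

definition cnt :: "nat \<Rightarrow> nat set \<Rightarrow> nat" where "cnt a B = card {b\<in>B. b < a}"
lemma cnt_empty: "cnt a {} = 0" by (simp add: cnt_def)
lemma cnt_ins: "finite B \<Longrightarrow> x \<notin> B \<Longrightarrow> cnt a (insert x B) = (if x < a then Suc (cnt a B) else cnt a B)"
proof -
  assume f: "finite B" "x \<notin> B"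
  have "{b \<in> insert x B. b < a} = (if x < a then insert x {b\<in>B. b<a} else {b\<in>B. b<a})" by auto
  then show ?thesis using f unfolding cnt_def by simp
qed
lemma shuffle_sign_ins': "finite B \<Longrightarrow> a \<notin> A \<Longrightarrow> finite A \<Longrightarrow>
  shuffle_sign (insert a A) B = (-1) ^ cnt a B * shuffle_sign A B"
  unfolding cnt_def by (rule shuffle_sign_ins)
lemma shuffle_sign_empty: "shuffle_sign {} B = 1" by (simp add: shuffle_sign_def)

lemma lessThan6: "{..<6::nat} = {0,1,2,3,4,5}" by auto
lemma lessThan3: "{..<3::nat} = {0,1,2}" by auto

definition sp :: "nat \<Rightarrow> nat \<Rightarrow> form \<Rightarrow> bool" where
  "sp p q f \<longleftrightarrow> (\<forall>A. f A \<noteq> 0 \<longrightarrow> card (A \<inter> {..<3}) = p \<and> card (A \<inter> {3..<6}) = q)"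

lemma spD: "sp p q f \<Longrightarrow> \<not> (card (A \<inter> {..<3}) = p \<and> card (A \<inter> {3..<6}) = q) \<Longrightarrow> f A = 0"
  unfolding sp_def by blast

lemma card_split: "finite A \<Longrightarrow> B \<subseteq> A \<Longrightarrow> card (A \<inter> L) = card (B \<inter> L) + card ((A - B) \<inter> L)"
proof -
  assume f: "finite A" "B \<subseteq> A"
  have "A \<inter> L = (B \<inter> L) \<union> ((A - B) \<inter> L)" using f by auto
  then show ?thesis using f by (metis card_Un_disjoint Diff_disjoint Int_Diff finite_Diff finite_Int finite_subset inf_commute inf_left_commute Int_empty_left Int_assoc)
qed

lemma sp_wedge: "sp p1 q1 f \<Longrightarrow> sp p2 q2 g \<Longrightarrow> sp (p1+p2) (q1+q2) (wedge f g)"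
proof -
  assume f: "sp p1 q1 f" and g: "sp p2 q2 g"
  show ?thesis unfolding sp_def
  proof (intro allI impI)
    fix A assume nz: "wedge f g A \<noteq> 0"
    have fin: "finite A"
    proof (rule ccontr)
      assume "infinite A"
      then have "infinite (Pow A)" by simp
      then show False using nz unfolding wedge_def by simp
    qed
    obtain B where B: "B \<in> Pow A" "shuffle_sign B (A - B) * f B * g (A - B) \<noteq> 0"
      using nz unfolding wedge_def by (meson sum.neutral)
    have fB: "f B \<noteq> 0" and gB: "g (A - B) \<noteq> 0" using B by auto
    have "card (B \<inter> {..<3}) = p1 \<and> card (B \<inter> {3..<6}) = q1" using f fB unfolding sp_def by blast
    moreover have "card ((A-B) \<inter> {..<3}) = p2 \<and> card ((A-B) \<inter> {3..<6}) = q2" using g gB unfolding sp_def by blast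
    ultimately show "card (A \<inter> {..<3}) = p1+p2 \<and> card (A \<inter> {3..<6}) = q1+q2"
      using card_split[OF fin] B(1) by simp
  qed
qed

lemma top:
  fixes U W :: form
  assumes U: "sp 1 1 U" and W: "sp 2 2 W"
  shows "wedge U W {..<6} = U {2, 5} * W {0, Suc 0, 3, 4} - U {2, 4} * W {0, Suc 0, 3, 5} +
     U {2, 3} * W {0, Suc 0, 4, 5} +
     (U {Suc 0, 4} * W {0, 2, 3, 5} - U {Suc 0, 5} * W {0, 2, 3, 4} -
      U {Suc 0, 3} * W {0, 2, 4, 5}) +
     (U {0, 5} * W {Suc 0, 2, 3, 4} - U {0, 4} * W {Suc 0, 2, 3, 5} +
      U {0, 3} * W {Suc 0, 2, 4, 5})"
  unfolding wedge_def lessThan6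
  by (simp add: sum_Pow_insert shuffle_sign_ins' cnt_empty cnt_ins shuffle_sign_empty spD[OF U] spD[OF W] insert_Diff_if insert_commute)

lemma sp_is_pq: "is_pq p q f \<Longrightarrow> sp p q f" unfolding is_pq_def sp_def by blast

definition oth1 :: "nat \<Rightarrow> nat" where "oth1 x = (if x = 0 then 1 else 0)"
definition oth2 :: "nat \<Rightarrow> nat" where "oth2 x = (if x = 2 then 1 else 2)"
definition D2x :: "(nat \<Rightarrow> nat \<Rightarrow> complex) \<Rightarrow> (nat \<Rightarrow> nat \<Rightarrow> complex) \<Rightarrow> nat \<Rightarrow> nat \<Rightarrow> complex" where
  "D2x X Y x y = X (oth1 x) (oth1 y) * Y (oth2 x) (oth2 y) + X (oth2 x) (oth2 y) * Y (oth1 x) (oth1 y)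
     - X (oth1 x) (oth2 y) * Y (oth2 x) (oth1 y) - X (oth2 x) (oth1 y) * Y (oth1 x) (oth2 y)"
definition Tu :: "(nat \<Rightarrow> nat \<Rightarrow> complex) \<Rightarrow> (nat \<Rightarrow> nat \<Rightarrow> complex) \<Rightarrow> (nat \<Rightarrow> nat \<Rightarrow> complex) \<Rightarrow> complex" where
  "Tu U X Y = (\<Sum>x<3. \<Sum>y<3. (-1)^(x+y) * U x y * D2x X Y x y)"
definition cf :: "form \<Rightarrow> nat \<Rightarrow> nat \<Rightarrow> complex" where "cf X p q = X {p, q+3}"

lemma sp_wedge11: "sp 1 1 X \<Longrightarrow> sp 1 1 Y \<Longrightarrow> sp 2 2 (wedge X Y)"
  using sp_wedge[of 1 1 X 1 1 Y] by (simp only: one_add_one)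

lemma topXY:
  fixes U X Y :: form
  assumes U: "sp 1 1 U" and X: "sp 1 1 X" and Y: "sp 1 1 Y"
  shows "wedge U (wedge X Y) {..<6} = - Tu (cf U) (cf X) (cf Y)"
  unfolding top[OF U sp_wedge11[OF X Y]]
  unfolding wedge_def Tu_def lessThan3 D2x_def oth1_def oth2_def cf_def
  by (simp add: sum_Pow_insert shuffle_sign_ins' cnt_empty cnt_ins shuffle_sign_empty spD[OF X] spD[OF Y] insert_Diff_if insert_commute algebra_simps)

lemma csw_csw[simp]: "csw (csw i) = i" unfolding csw_def by auto

lemma csw_img_eq: "csw ` T = {p} \<Longrightarrow> T = {csw p}"
proof -
  assume h: "csw ` T = {p}"
  have "csw ` (csw ` T) = T" by (simp add: image_comp)
  then show ?thesis using h by simp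
qed

lemma conj_single: "conj_form f {k} = cnj (f {csw k})"
proof -
  have e: "{(a, b). a \<in> csw ` {k} \<and> b \<in> csw ` {k} \<and> a < b \<and> csw b < csw a} = {}" by auto
  show ?thesis unfolding conj_form_def e by simp
qed

lemma sp_conj10:
  assumes a: "sp 1 0 a" shows "sp 0 1 (conj_form a)"
  unfolding sp_def
proof (intro allI impI)
  fix T assume "conj_form a T \<noteq> 0"
  then have nz: "a (csw ` T) \<noteq> 0" unfolding conj_form_def by auto
  then have c: "card (csw ` T \<inter> {..<3}) = 1" "card (csw ` T \<inter> {3..<6}) = 0" using a unfolding sp_def by auto
  show "card (T \<inter> {..<3}) = 0 \<and> card (T \<inter> {3..<6}) = 1"
  proof -
    have inj: "inj csw" by (metis csw_csw injI)
    have e1: "T \<inter> {..<3} = csw ` (csw ` T \<inter> {3..<6})"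
    proof
      show "T \<inter> {..<3} \<subseteq> csw ` (csw ` T \<inter> {3..<6})"
      proof
        fix x assume x: "x \<in> T \<inter> {..<3}"
        then have "csw x \<in> csw ` T \<inter> {3..<6}" by (auto simp: csw_def)
        then show "x \<in> csw ` (csw ` T \<inter> {3..<6})" by (metis csw_csw image_eqI)
      qed
      show "csw ` (csw ` T \<inter> {3..<6}) \<subseteq> T \<inter> {..<3}"
        by (auto simp: csw_def)
    qed
    have e2: "T \<inter> {3..<6} = csw ` (csw ` T \<inter> {..<3})"
    proof
      show "T \<inter> {3..<6} \<subseteq> csw ` (csw ` T \<inter> {..<3})"
      proof
        fix x assume x: "x \<in> T \<inter> {3..<6}"
        then have "csw x \<in> csw ` T \<inter> {..<3}" by (auto simp: csw_def)
        then show "x \<in> csw ` (csw ` T \<inter> {..<3})" by (metis csw_csw image_eqI)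
      qed
      show "csw ` (csw ` T \<inter> {..<3}) \<subseteq> T \<inter> {3..<6}"
        by (auto simp: csw_def)
    qed
    show ?thesis unfolding e1 e2 using c card_image[OF inj_on_subset[OF inj]] by simp
  qed
qed

lemma three_cases: "(p::nat) < 3 \<Longrightarrow> p = 0 \<or> p = 1 \<or> p = 2" by auto

lemma wedge_conj_val:
  assumes a: "sp 1 0 a" and pq: "p < 3" "q < 3"
  shows "wedge a (conj_form a) {p, q+3} = a {p} * cnj (a {q})"
proof -
  have ca: "sp 0 1 (conj_form a)" by (rule sp_conj10[OF a])
  show ?thesis using three_cases[OF pq(1)] three_cases[OF pq(2)]
    unfolding wedge_def
    by (auto simp: sum_Pow_insert shuffle_sign_ins' cnt_empty cnt_ins shuffle_sign_empty spD[OF a] spD[OF ca]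
        insert_Diff_if insert_commute conj_single csw_def)
qed

lemma sp_wedge10: "sp 1 0 X \<Longrightarrow> sp 0 1 Y \<Longrightarrow> sp 1 1 (wedge X Y)"
  using sp_wedge[of 1 0 X 0 1 Y] by simp

lemma sp_smult: "sp p q X \<Longrightarrow> sp p q (form_smult c X)"
  unfolding sp_def form_smult_def by auto

lemma sp_dz: "k < 3 \<Longrightarrow> sp 1 0 (dz k)"
  unfolding sp_def dz_def gen_def by auto
lemma sp_dzbar: "k < 3 \<Longrightarrow> sp 0 1 (dzbar k)"
  unfolding sp_def dzbar_def gen_def by auto

lemma Vol_top: "Vol {..<6} = \<i>/8"
proof -
  have s: "sp 1 1 (form_smult (\<i>/2) (wedge (dz k) (dzbar k)))" if "k < 3" for k
    by (intro sp_smult sp_wedge10 sp_dz sp_dzbar that)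
  have "Vol {..<6} = - Tu (cf (form_smult (\<i>/2) (wedge (dz 0) (dzbar 0))))
     (cf (form_smult (\<i>/2) (wedge (dz 1) (dzbar 1)))) (cf (form_smult (\<i>/2) (wedge (dz 2) (dzbar 2))))"
    unfolding Vol_def by (intro topXY s) simp_all
  also have "\<dots> = \<i>/8"
    unfolding Tu_def lessThan3 D2x_def oth1_def oth2_def cf_def
    by (simp add: wedge_def form_smult_def dz_def dzbar_def gen_def sum_Pow_insert shuffle_sign_ins' cnt_empty cnt_ins shuffle_sign_empty
        insert_Diff_if insert_commute)
  finally show ?thesis .
qed

lemma wedge_diff: "wedge f (form_diff g h) S = wedge f g S - wedge f h S"
  unfolding wedge_def form_diff_def by (simp add: algebra_simps sum_subtractf)

lemma Tu_cong: "(\<And>x y. x < 3 \<Longrightarrow> y < 3 \<Longrightarrow> U x y = U' x y) \<Longrightarrow> Tu U X Y = Tu U' X Y"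
  unfolding Tu_def by (intro sum.cong refl) auto

lemma hermQ_formula:
  assumes a: "sp 1 0 a" and M: "\<And>i j. i < 2 \<Longrightarrow> j < 2 \<Longrightarrow> sp 1 1 (M i j)"
  shows "hermQ (det2 M) a a = 8 * (Tu (\<lambda>x y. a {x} * cnj (a {y})) (cf (M 0 1)) (cf (M 1 0))
                                - Tu (\<lambda>x y. a {x} * cnj (a {y})) (cf (M 0 0)) (cf (M 1 1)))"
proof -
  let ?U = "wedge a (conj_form a)"
  have U: "sp 1 1 ?U" by (intro sp_wedge10 a sp_conj10)
  have cU: "Tu (cf ?U) X Y = Tu (\<lambda>x y. a {x} * cnj (a {y})) X Y" for X Y
    by (rule Tu_cong) (simp add: cf_def wedge_conj_val[OF a])
  have "hermQ (det2 M) a a = \<i> * (wedge ?U (wedge (M 0 0) (M 1 1)) {..<6} - wedge ?U (wedge (M 0 1) (M 1 0)) {..<6}) / (\<i>/8)"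
    unfolding hermQ_def star_def det2_def wedge_diff Vol_top by (simp add: field_simps complex_i_mult_minus)
  also have "\<dots> = \<i> * (- Tu (cf ?U) (cf (M 0 0)) (cf (M 1 1)) + Tu (cf ?U) (cf (M 0 1)) (cf (M 1 0))) / (\<i>/8)"
    using topXY[OF U M M, of 0 0 1 1] topXY[OF U M M, of 0 1 1 0] by simp
  finally show ?thesis unfolding cU by (simp add: field_simps)
qed


definition cross :: "(nat \<Rightarrow> complex) \<Rightarrow> (nat \<Rightarrow> complex) \<Rightarrow> nat \<Rightarrow> complex" where
  "cross u v k = (if k = 0 then u 1 * v 2 - u 2 * v 1 else if k = 1 then u 2 * v 0 - u 0 * v 2 else u 0 * v 1 - u 1 * v 0)"
definition bil :: "(nat \<Rightarrow> nat \<Rightarrow> complex) \<Rightarrow> (nat \<Rightarrow> complex) \<Rightarrow> (nat \<Rightarrow> complex) \<Rightarrow> complex" where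
  "bil X u w = (\<Sum>p<3. \<Sum>q<3. u p * X p q * cnj (w q))"
definition D2 :: "complex \<Rightarrow> complex \<Rightarrow> complex \<Rightarrow> complex \<Rightarrow> complex \<Rightarrow> complex \<Rightarrow> complex \<Rightarrow> complex \<Rightarrow> complex" where
  "D2 a00 a01 a10 a11 b00 b01 b10 b11 = a00 * b11 + a11 * b00 - a01 * b10 - a10 * b01"

lemma Tu_cross:
  "Tu (\<lambda>x y. cross u v x * cnj (cross u v y)) X Y =
   D2 (bil X u u) (bil X u v) (bil X v u) (bil X v v) (bil Y u u) (bil Y u v) (bil Y v u) (bil Y v v)"
  unfolding Tu_def D2x_def oth1_def oth2_def lessThan3 cross_def bil_def D2_def
  by (simp add: algebra_simps)


lemma all3: "P 0 \<Longrightarrow> P 1 \<Longrightarrow> P 2 \<Longrightarrow> \<forall>p<3. P (p::nat)"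
  using three_cases by metis

lemma perp3:
  fixes a b :: "nat \<Rightarrow> complex"
  shows "\<exists>c0 c1 c2. c0 * a 0 + c1 * a 1 + c2 * a 2 = 0 \<and> c0 * b 0 + c1 * b 1 + c2 * b 2 = 0 \<and> (c0 \<noteq> 0 \<or> c1 \<noteq> 0 \<or> c2 \<noteq> 0)"
proof -
  consider "a 1 * b 2 - a 2 * b 1 \<noteq> 0 \<or> a 2 * b 0 - a 0 * b 2 \<noteq> 0 \<or> a 0 * b 1 - a 1 * b 0 \<noteq> 0"
    | "a 1 * b 2 - a 2 * b 1 = 0" "a 2 * b 0 - a 0 * b 2 = 0" "a 0 * b 1 - a 1 * b 0 = 0" "a 0 \<noteq> 0 \<or> a 1 \<noteq> 0 \<or> a 2 \<noteq> 0"
    | "a 0 = 0" "a 1 = 0" "a 2 = 0" "b 0 \<noteq> 0 \<or> b 1 \<noteq> 0 \<or> b 2 \<noteq> 0"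
    | "a 0 = 0" "a 1 = 0" "a 2 = 0" "b 0 = 0" "b 1 = 0" "b 2 = 0"
    by blast
  then show ?thesis
  proof cases
    case 1
    show ?thesis
      by (rule exI[of _ "a 1 * b 2 - a 2 * b 1"], rule exI[of _ "a 2 * b 0 - a 0 * b 2"], rule exI[of _ "a 0 * b 1 - a 1 * b 0"])
        (use 1 in \<open>auto simp: algebra_simps\<close>)
  next
    case 2
    then consider "a 1 \<noteq> 0 \<or> a 2 \<noteq> 0" | "a 0 \<noteq> 0" by blast
    then show ?thesis
    proof cases
      case 1
      show ?thesis
        by (rule exI[of _ 0], rule exI[of _ "a 2"], rule exI[of _ "- a 1"])
          (use 1 2 in \<open>auto simp: algebra_simps\<close>)
    next
      case 3: 2
      show ?thesis
        by (rule exI[of _ "- a 2"], rule exI[of _ 0], rule exI[of _ "a 0"])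
          (use 3 2 in \<open>auto simp: algebra_simps\<close>)
    qed
  next
    case 3
    then consider "b 1 \<noteq> 0 \<or> b 2 \<noteq> 0" | "b 0 \<noteq> 0" by blast
    then show ?thesis
    proof cases
      case 1
      show ?thesis
        by (rule exI[of _ 0], rule exI[of _ "b 2"], rule exI[of _ "- b 1"])
          (use 1 3 in \<open>auto simp: algebra_simps\<close>)
    next
      case 2
      show ?thesis
        by (rule exI[of _ "- b 2"], rule exI[of _ 0], rule exI[of _ "b 0"])
          (use 3 2 in \<open>auto simp: algebra_simps\<close>)
    qed
  next
    case 4
    show ?thesis by (rule exI[of _ 1]) (use 4 in auto)
  qed
qed

lemma linalg3:
  fixes W :: "nat \<Rightarrow> nat \<Rightarrow> complex" and x :: "nat \<Rightarrow> complex"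
  assumes Wx: "\<forall>l<3. (\<Sum>p<3. W l p * x p) = 0" and x: "\<exists>p<3. x p \<noteq> 0"
  shows "\<exists>c. (\<forall>p<3. (\<Sum>l<3. c l * W l p) = 0) \<and> (\<exists>l<3. c l \<noteq> 0)"
proof -
  have r: "W l 0 * x 0 + W l 1 * x 1 + W l 2 * x 2 = 0" if "l < 3" for l
    using Wx that by (simp add: lessThan3 add.assoc)
  have r0: "W 0 0 * x 0 + W 0 1 * x 1 + W 0 2 * x 2 = 0" using r[of 0] by simp
  have r1: "W 1 0 * x 0 + W 1 1 * x 1 + W 1 2 * x 2 = 0" using r[of 1] by simp
  have r2: "W 2 0 * x 0 + W 2 1 * x 1 + W 2 2 * x 2 = 0" using r[of 2] by simp
  have x3: "x 0 \<noteq> 0 \<or> x 1 \<noteq> 0 \<or> x 2 \<noteq> 0" using x three_cases by metis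
  have key: "\<exists>c0 c1 c2. (\<forall>p<3. c0 * W 0 p + c1 * W 1 p + c2 * W 2 p = 0) \<and> (c0 \<noteq> 0 \<or> c1 \<noteq> 0 \<or> c2 \<noteq> 0)"
  proof -
    from x3 consider "x 0 \<noteq> 0" | "x 1 \<noteq> 0" | "x 2 \<noteq> 0" by blast
    then show ?thesis
    proof cases
      case 1
      obtain c0 c1 c2 where c: "c0 * W 0 1 + c1 * W 1 1 + c2 * W 2 1 = 0" "c0 * W 0 2 + c1 * W 1 2 + c2 * W 2 2 = 0"
        "c0 \<noteq> 0 \<or> c1 \<noteq> 0 \<or> c2 \<noteq> 0"
        using perp3[of "\<lambda>l. W l 1" "\<lambda>l. W l 2"] by auto
      have "(c0 * W 0 0 + c1 * W 1 0 + c2 * W 2 0) * x 0 = - x 1 * (c0 * W 0 1 + c1 * W 1 1 + c2 * W 2 1) - x 2 * (c0 * W 0 2 + c1 * W 1 2 + c2 * W 2 2)"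
        using r0 r1 r2 by algebra
      then have "c0 * W 0 0 + c1 * W 1 0 + c2 * W 2 0 = 0" using c 1 by simp
      then have "\<forall>p<3. c0 * W 0 p + c1 * W 1 p + c2 * W 2 p = 0" using c by (intro all3) simp_all
      then show ?thesis using c(3) by blast
    next
      case 2
      obtain c0 c1 c2 where c: "c0 * W 0 0 + c1 * W 1 0 + c2 * W 2 0 = 0" "c0 * W 0 2 + c1 * W 1 2 + c2 * W 2 2 = 0"
        "c0 \<noteq> 0 \<or> c1 \<noteq> 0 \<or> c2 \<noteq> 0"
        using perp3[of "\<lambda>l. W l 0" "\<lambda>l. W l 2"] by auto
      have "(c0 * W 0 1 + c1 * W 1 1 + c2 * W 2 1) * x 1 = - x 0 * (c0 * W 0 0 + c1 * W 1 0 + c2 * W 2 0) - x 2 * (c0 * W 0 2 + c1 * W 1 2 + c2 * W 2 2)"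
        using r0 r1 r2 by algebra
      then have "c0 * W 0 1 + c1 * W 1 1 + c2 * W 2 1 = 0" using c 2 by simp
      then have "\<forall>p<3. c0 * W 0 p + c1 * W 1 p + c2 * W 2 p = 0" using c by (intro all3) simp_all
      then show ?thesis using c(3) by blast
    next
      case 3
      obtain c0 c1 c2 where c: "c0 * W 0 0 + c1 * W 1 0 + c2 * W 2 0 = 0" "c0 * W 0 1 + c1 * W 1 1 + c2 * W 2 1 = 0"
        "c0 \<noteq> 0 \<or> c1 \<noteq> 0 \<or> c2 \<noteq> 0"
        using perp3[of "\<lambda>l. W l 0" "\<lambda>l. W l 1"] by auto
      have "(c0 * W 0 2 + c1 * W 1 2 + c2 * W 2 2) * x 2 = - x 0 * (c0 * W 0 0 + c1 * W 1 0 + c2 * W 2 0) - x 1 * (c0 * W 0 1 + c1 * W 1 1 + c2 * W 2 1)"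
        using r0 r1 r2 by algebra
      then have "c0 * W 0 2 + c1 * W 1 2 + c2 * W 2 2 = 0" using c 3 by simp
      then have "\<forall>p<3. c0 * W 0 p + c1 * W 1 p + c2 * W 2 p = 0" using c by (intro all3) simp_all
      then show ?thesis using c(3) by blast
    qed
  qed
  then obtain c0 c1 c2 where c: "\<forall>p<3. c0 * W 0 p + c1 * W 1 p + c2 * W 2 p = 0" "c0 \<noteq> 0 \<or> c1 \<noteq> 0 \<or> c2 \<noteq> 0"
    by blast
  define cc where "cc = (\<lambda>l::nat. if l = 0 then c0 else if l = 1 then c1 else c2)"
  have "\<forall>p<3. (\<Sum>l<3. cc l * W l p) = 0" using c(1) by (simp add: lessThan3 cc_def add.assoc)
  moreover have "\<exists>l<3. cc l \<noteq> 0"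
  proof -
    have e: "cc 0 = c0" "cc 1 = c1" "cc 2 = c2" unfolding cc_def by simp_all
    have "c0 \<noteq> 0 \<Longrightarrow> ?thesis" using e(1) by (intro exI[of _ 0]) simp
    moreover have "c1 \<noteq> 0 \<Longrightarrow> ?thesis" using e(2) by (intro exI[of _ 1]) simp
    moreover have "c2 \<noteq> 0 \<Longrightarrow> ?thesis" using e(3) by (intro exI[of _ 2]) simp
    ultimately show ?thesis using c(2) by blast
  qed
  ultimately show ?thesis by blast
qed

lemma exists_cross:
  assumes "\<exists>p<3. al p \<noteq> (0::complex)"
  shows "\<exists>u v. \<forall>k<3. cross u v k = al k"
proof -
  from assms three_cases consider "al 0 \<noteq> 0" | "al 1 \<noteq> 0" | "al 2 \<noteq> 0" by metis
  then show ?thesis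
  proof cases
    case 1
    let ?u = "\<lambda>k::nat. if k = 0 then - al 1 else if k = 1 then al 0 else 0"
    let ?v = "\<lambda>k::nat. if k = 0 then - al 2 / al 0 else if k = 1 then 0 else 1"
    have "\<forall>k<3. cross ?u ?v k = al k" using 1 by (intro all3) (simp_all add: cross_def)
    then show ?thesis by blast
  next
    case 2
    let ?u = "\<lambda>k::nat. if k = 0 then 0 else if k = 1 then - al 2 else al 1"
    let ?v = "\<lambda>k::nat. if k = 0 then 1 else if k = 1 then - al 0 / al 1 else 0"
    have "\<forall>k<3. cross ?u ?v k = al k" using 2 by (intro all3) (simp_all add: cross_def)
    then show ?thesis by blast
  next
    case 3
    let ?u = "\<lambda>k::nat. if k = 0 then al 2 else if k = 1 then 0 else - al 0"
    let ?v = "\<lambda>k::nat. if k = 0 then 0 else if k = 1 then 1 else - al 1 / al 2"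
    have "\<forall>k<3. cross ?u ?v k = al k" using 3 by (intro all3) (simp_all add: cross_def)
    then show ?thesis by blast
  qed
qed

lemma bil_herm:
  assumes "\<forall>p<3. \<forall>q<3. Y p q = cnj (X q p)"
  shows "bil Y a b = cnj (bil X b a)"
proof -
  have "cnj (bil X b a) = (\<Sum>p<3. \<Sum>q<3. cnj (b p) * cnj (X p q) * a q)"
    unfolding bil_def by simp
  also have "\<dots> = (\<Sum>p<3. \<Sum>q<3. cnj (b p) * Y q p * a q)"
    using assms by (intro sum.cong refl) simp
  also have "\<dots> = (\<Sum>q<3. \<Sum>p<3. cnj (b p) * Y q p * a q)"
    by (rule sum.swap)
  also have "\<dots> = bil Y a b"
    unfolding bil_def by (intro sum.cong refl) (simp add: algebra_simps)
  finally show ?thesis by simp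
qed

lemma bil_sub: "bil X u (\<lambda>q. v q - c * u q) = bil X u v - cnj c * bil X u u"
  unfolding bil_def lessThan3 by (simp add: algebra_simps)

lemma bil_K:
  fixes h :: "nat \<Rightarrow> nat \<Rightarrow> nat \<Rightarrow> nat \<Rightarrow> complex" and \<theta> :: "nat \<Rightarrow> complex"
  shows "bil (\<lambda>p q. \<Sum>i<2. \<Sum>j<2. \<theta> i * cnj (\<theta> j) * h i j p q) w w =
   \<theta> 0 * cnj (\<theta> 0) * bil (h 0 0) w w + \<theta> 1 * cnj (\<theta> 1) * bil (h 1 1) w w
   + \<theta> 0 * cnj (\<theta> 1) * bil (h 0 1) w w + \<theta> 1 * cnj (\<theta> 0) * bil (h 1 0) w w"
proof -
  have l2: "{..<2::nat} = {0,1}" by auto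
  show ?thesis unfolding bil_def lessThan3 l2 by (simp add: algebra_simps)
qed

lemma pos_pair:
  fixes a b c :: complex
  assumes ia: "Im a = 0" and ib: "Im b = 0"
  and P: "\<And>t0 t1. t0 \<noteq> 0 \<or> t1 \<noteq> 0 \<Longrightarrow> 0 < Re (t0 * cnj t0 * a + t1 * cnj t1 * b + t0 * cnj t1 * c + t1 * cnj t0 * cnj c)"
  shows "0 < Re a" "0 < Re b" "cmod c ^ 2 < Re a * Re b"
proof -
  show A: "0 < Re a" using P[of 1 0] by simp
  show B: "0 < Re b" using P[of 0 1] by simp
  define x where "x = Re a"
  define y where "y = Re b"
  define n where "n = cmod c ^ 2"
  have a: "a = of_real x" using ia unfolding x_def by (simp add: complex_eq_iff)
  have b: "b = of_real y" using ib unfolding y_def by (simp add: complex_eq_iff)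
  have cc: "c * cnj c = of_real n" unfolding n_def by (rule complex_norm_square[symmetric])
  have e: "complex_of_real y * cnj (complex_of_real y) * a + (- c) * cnj (- c) * b
      + complex_of_real y * cnj (- c) * c + (- c) * cnj (complex_of_real y) * cnj c
      = of_real (y * (x * y - n))"
  proof -
    have "complex_of_real y * cnj (complex_of_real y) * a + (- c) * cnj (- c) * b
      + complex_of_real y * cnj (- c) * c + (- c) * cnj (complex_of_real y) * cnj c
      = of_real y * of_real y * of_real x + (c * cnj c) * of_real y - 2 * of_real y * (c * cnj c)"
      unfolding a b by (simp add: algebra_simps)
    also have "\<dots> = of_real (y * (x * y - n))" unfolding cc by (simp add: algebra_simps)
    finally show ?thesis .
  qed
  have "0 < Re (complex_of_real y * cnj (complex_of_real y) * a + (- c) * cnj (- c) * b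
      + complex_of_real y * cnj (- c) * c + (- c) * cnj (complex_of_real y) * cnj c)"
    using P[of "complex_of_real y" "- c"] B unfolding y_def by simp
  then have "0 < y * (x * y - n)" unfolding e by simp
  then show "cmod c ^ 2 < Re a * Re b" using B unfolding x_def y_def n_def by (simp add: zero_less_mult_iff)
qed

lemma final2:
  fixes A0 B0 A1 B1 :: real and c0 c1 :: complex
  assumes "0 < A0" "0 < B0" "0 < A1" "0 < B1" "cmod c0 ^ 2 < A0 * B0" "cmod c1 ^ 2 < A1 * B1"
  shows "2 * Re (c0 * cnj c1) < A0 * B1 + A1 * B0"
proof -
  have r: "Re (c0 * cnj c1) \<le> cmod c0 * cmod c1"
    using complex_Re_le_cmod[of "c0 * cnj c1"] by (simp add: norm_mult)
  have "(cmod c0 * cmod c1)^2 = cmod c0 ^ 2 * cmod c1 ^ 2" by (simp add: power_mult_distrib)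
  also have "\<dots> < (A0 * B0) * (A1 * B1)"
    by (rule mult_strict_mono) (use assms in auto)
  also have "\<dots> \<le> ((A0 * B1 + A1 * B0) / 2)^2"
  proof -
    have "((A0 * B1 + A1 * B0) / 2)^2 - (A0 * B0) * (A1 * B1) = ((A0 * B1 - A1 * B0) / 2)^2"
      by (simp add: power2_eq_square field_simps)
    moreover have "0 \<le> ((A0 * B1 - A1 * B0) / 2)^2" by simp
    ultimately show ?thesis by linarith
  qed
  finally have "(cmod c0 * cmod c1)^2 < ((A0 * B1 + A1 * B0) / 2)^2" .
  moreover have "0 \<le> (A0 * B1 + A1 * B0) / 2" using assms by (simp add: add_nonneg_nonneg)
  ultimately have "cmod c0 * cmod c1 < (A0 * B1 + A1 * B0) / 2"
    by (rule power2_less_imp_less)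
  then have h: "2 * (cmod c0 * cmod c1) < A0 * B1 + A1 * B0" by simp
  have "2 * Re (c0 * cnj c1) \<le> 2 * (cmod c0 * cmod c1)" using r by simp
  then show ?thesis using h by linarith
qed


lemma alg_main:
  fixes h :: "nat \<Rightarrow> nat \<Rightarrow> nat \<Rightarrow> nat \<Rightarrow> complex" and al :: "nat \<Rightarrow> complex"
  assumes herm: "\<And>i j. i < 2 \<Longrightarrow> j < 2 \<Longrightarrow> \<forall>p<3. \<forall>q<3. h i j p q = cnj (h j i q p)"
  and G: "\<And>\<theta> x. \<theta> 0 \<noteq> 0 \<or> \<theta> 1 \<noteq> 0 \<Longrightarrow> \<exists>p<3. x p \<noteq> 0 \<Longrightarrow>
            0 < Re (bil (\<lambda>p q. \<Sum>i<2. \<Sum>j<2. \<theta> i * cnj (\<theta> j) * h i j p q) x x)"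
  and al: "\<exists>p<3. al p \<noteq> 0"
  shows "Im (Tu (\<lambda>x y. al x * cnj (al y)) (h 0 0) (h 1 1) - Tu (\<lambda>x y. al x * cnj (al y)) (h 0 1) (h 1 0)) = 0 \<and>
         0 < Re (Tu (\<lambda>x y. al x * cnj (al y)) (h 0 0) (h 1 1) - Tu (\<lambda>x y. al x * cnj (al y)) (h 0 1) (h 1 0))"
proof -
  obtain u v where uv: "\<forall>k<3. cross u v k = al k" using exists_cross[OF al] by blast
  have h10: "bil (h 1 0) a b = cnj (bil (h 0 1) b a)" for a b by (rule bil_herm, rule herm) simp_all
  have Gw: "0 < Re (t0 * cnj t0 * bil (h 0 0) w w + t1 * cnj t1 * bil (h 1 1) w w + t0 * cnj t1 * bil (h 0 1) w w + t1 * cnj t0 * cnj (bil (h 0 1) w w))"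
    if "t0 \<noteq> 0 \<or> t1 \<noteq> 0" "\<exists>p<3. w p \<noteq> 0" for t0 t1 w
  proof -
    define \<theta> where "\<theta> = (\<lambda>i::nat. if i = 0 then t0 else t1)"
    have t: "\<theta> 0 = t0" "\<theta> 1 = t1" by (simp_all add: \<theta>_def)
    have "0 < Re (bil (\<lambda>p q. \<Sum>i<2. \<Sum>j<2. \<theta> i * cnj (\<theta> j) * h i j p q) w w)"
      by (rule G) (use that t in auto)
    then show ?thesis unfolding bil_K h10 t .
  qed
  have real: "Im (bil (h i i) w w) = 0" if "i < 2" for i w
  proof -
    have "bil (h i i) w w = cnj (bil (h i i) w w)" by (rule bil_herm, rule herm) (use that in simp_all)
    then show ?thesis by (metis Reals_cnj_iff complex_is_Real_iff)
  qed
  have real0: "Im (bil (h 0 0) w w) = 0" for w using real[of 0 w] by simp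
  have real1: "Im (bil (h 1 1) w w) = 0" for w using real[of 1 w] by simp
  have pp: "0 < Re (bil (h 0 0) w w) \<and> 0 < Re (bil (h 1 1) w w) \<and> cmod (bil (h 0 1) w w)^2 < Re (bil (h 0 0) w w) * Re (bil (h 1 1) w w)"
    if "\<exists>p<3. w p \<noteq> 0" for w
  proof -
    note P = pos_pair[OF real0[of w] real1[of w] Gw[OF _ that]]
    show ?thesis using P(1) P(2) P(3) by blast
  qed
  have nz1: "\<exists>p<3. w p \<noteq> 0" if "\<forall>k<3. cross w z k = al k" for w z
  proof (rule ccontr)
    assume "\<not> ?thesis" then have w0: "w 0 = 0" "w 1 = 0" "w 2 = 0" by auto
    have "al k = 0" if k: "k < 3" for k
    proof -
      have "al k = cross w z k" using \<open>\<forall>k<3. cross w z k = al k\<close> k by simp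
      also have "\<dots> = 0" unfolding cross_def w0 by simp
      finally show ?thesis .
    qed
    then show False using al by auto
  qed
  have nz2: "\<exists>p<3. z p \<noteq> 0" if "\<forall>k<3. cross w z k = al k" for w z
  proof (rule ccontr)
    assume "\<not> ?thesis" then have z0: "z 0 = 0" "z 1 = 0" "z 2 = 0" by auto
    have "al k = 0" if k: "k < 3" for k
    proof -
      have "al k = cross w z k" using \<open>\<forall>k<3. cross w z k = al k\<close> k by simp
      also have "\<dots> = 0" unfolding cross_def z0 by simp
      finally show ?thesis .
    qed
    then show False using al by auto
  qed
  define A where "A = bil (h 0 0) u u"
  have A0: "A \<noteq> 0" using pp[OF nz1[OF uv]] unfolding A_def by auto
  define c where "c = cnj (bil (h 0 0) u v / A)"
  define v' where "v' = (\<lambda>q. v q - c * u q)"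
  have cv: "cross u v' k = cross u v k" for k unfolding cross_def v'_def by (simp add: algebra_simps)
  have cr: "\<forall>k<3. cross u v' k = al k" using uv cv by simp
  have o1: "bil (h 0 0) u v' = 0" unfolding v'_def bil_sub c_def using A0 by (simp add: A_def)
  have o2: "bil (h 0 0) v' u = 0"
  proof -
    have "bil (h 0 0) v' u = cnj (bil (h 0 0) u v')" by (rule bil_herm, rule herm) simp_all
    then show ?thesis using o1 by simp
  qed
  have ET: "Tu (\<lambda>x y. al x * cnj (al y)) X Y = Tu (\<lambda>x y. cross u v' x * cnj (cross u v' y)) X Y" for X Y
    by (rule Tu_cong) (simp add: cr)
  define a0 where "a0 = bil (h 0 0) u u"
  define a1 where "a1 = bil (h 0 0) v' v'"
  define b0 where "b0 = bil (h 1 1) u u"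
  define b1 where "b1 = bil (h 1 1) v' v'"
  define c0 where "c0 = bil (h 0 1) u u"
  define c1 where "c1 = bil (h 0 1) v' v'"
  define d0 where "d0 = bil (h 0 1) u v'"
  define d1 where "d1 = bil (h 0 1) v' u"
  have E: "Tu (\<lambda>x y. al x * cnj (al y)) (h 0 0) (h 1 1) - Tu (\<lambda>x y. al x * cnj (al y)) (h 0 1) (h 1 0)
     = a0 * b1 + a1 * b0 - (c0 * cnj c1 + c1 * cnj c0 - d0 * cnj d0 - d1 * cnj d1)"
    unfolding ET Tu_cross D2_def h10 o1 o2 a0_def a1_def b0_def b1_def c0_def c1_def d0_def d1_def by simp
  have ppu: "0 < Re a0 \<and> 0 < Re b0 \<and> cmod c0 ^ 2 < Re a0 * Re b0"
    using pp[OF nz1[OF uv]] unfolding a0_def b0_def c0_def by simp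
  have ppv: "0 < Re a1 \<and> 0 < Re b1 \<and> cmod c1 ^ 2 < Re a1 * Re b1"
    using pp[OF nz2[OF cr]] unfolding a1_def b1_def c1_def by simp
  have ra: "Im a0 = 0" "Im a1 = 0" "Im b0 = 0" "Im b1 = 0"
    unfolding a0_def a1_def b0_def b1_def using real0 real1 by simp_all
  have f2: "2 * Re (c0 * cnj c1) < Re a0 * Re b1 + Re a1 * Re b0"
    by (rule final2) (use ppu ppv in auto)
  have re: "Re (a0 * b1 + a1 * b0 - (c0 * cnj c1 + c1 * cnj c0 - d0 * cnj d0 - d1 * cnj d1))
      = Re a0 * Re b1 + Re a1 * Re b0 - 2 * Re (c0 * cnj c1) + cmod d0 ^ 2 + cmod d1 ^ 2"
  proof -
    have n: "cmod d * cmod d = Re d * Re d + Im d * Im d" for d using cmod_power2[of d] by (simp add: power2_eq_square)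
    show ?thesis using ra by (simp add: n power2_eq_square algebra_simps)
  qed
  have im: "Im (a0 * b1 + a1 * b0 - (c0 * cnj c1 + c1 * cnj c0 - d0 * cnj d0 - d1 * cnj d1)) = 0"
    using ra by (simp add: algebra_simps)
  show ?thesis unfolding E re im using f2 by (simp add: add_nonneg_nonneg add_pos_nonneg)
qed


lemma shape10:
  assumes "is_pq 1 0 f" "f S \<noteq> 0" shows "\<exists>p<3. S = {p}"
proof -
  from assms have s: "S \<subseteq> {..<6}" "card (S \<inter> {..<3}) = 1" "card (S \<inter> {3..<6}) = 0"
    unfolding is_pq_def by auto
  have fin: "finite S" using s(1) finite_subset by blast
  have em: "S \<inter> {3..<6} = {}" using s(3) fin by simp
  have "x < 3" if "x \<in> S" for x
  proof (rule ccontr)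
    assume "\<not> x < 3"
    moreover have "x < 6" using that s(1) by auto
    ultimately have "x \<in> S \<inter> {3..<6}" using that by auto
    then show False using em by auto
  qed
  then have e: "S = S \<inter> {..<3}" by auto
  obtain p where p: "S \<inter> {..<3} = {p}" using s(2) by (rule card_1_singletonE)
  then have "p < 3" by auto
  then show ?thesis using e p by auto
qed

lemma conj_two:
  assumes "p < 3" "q < 3"
  shows "conj_form f {p, q+3} = - cnj (f {q, p+3})"
proof -
  have im: "csw ` {p, q+3} = {q, p+3}" using assms by (auto simp: csw_def)
  have e: "{(a, b). a \<in> {q, p+3} \<and> b \<in> {q, p+3} \<and> a < b \<and> csw b < csw a} = {(q, p+3)}"
    using assms by (auto simp: csw_def)
  show ?thesis unfolding conj_form_def im e by simp
qed

lemma Tu_scale: "Tu U (\<lambda>p q. k * X p q) (\<lambda>p q. k * Y p q) = k * k * Tu U X Y"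
  unfolding Tu_def D2x_def by (simp add: sum_distrib_left algebra_simps)

lemma bil_gram:
  fixes W :: "nat \<Rightarrow> nat \<Rightarrow> complex"
  shows "bil (\<lambda>p q. \<Sum>l<3. W l p * cnj (W l q)) x x = (\<Sum>l<3. (\<Sum>p<3. x p * W l p) * cnj (\<Sum>p<3. x p * W l p))"
  unfolding bil_def lessThan3 by (simp add: algebra_simps)

lemma kahler_pos:
  assumes K: "kahler K" and x: "\<exists>p<3. x p \<noteq> 0"
  shows "0 < Re (bil (\<lambda>p q. -2 * \<i> * K {p, q+3}) x x)"
proof -
  obtain w where w10: "\<forall>l<3. is_pq 1 0 (w l)"
    and ind: "\<forall>c. form_sum (\<lambda>l. form_smult (c l) (w l)) {..<3} = form_zero \<longrightarrow> (\<forall>l<3. c l = 0)"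
    and Kw: "K = form_sum (\<lambda>l. form_smult (\<i>/2) (wedge (w l) (conj_form (w l)))) {..<3}"
    using K unfolding kahler_def by blast
  define W where "W l p = w l {p}" for l p
  have spw: "sp 1 0 (w l)" if "l < 3" for l using w10 that sp_is_pq by blast
  have Kv: "-2 * \<i> * K {p, q+3} = (\<Sum>l<3. W l p * cnj (W l q))" if "p < 3" "q < 3" for p q
  proof -
    have "K {p, q+3} = (\<Sum>l<3. \<i>/2 * (w l {p} * cnj (w l {q})))"
      unfolding Kw form_sum_def form_smult_def
      by (intro sum.cong refl) (simp add: wedge_conj_val[OF spw] that)
    then show ?thesis by (simp add: W_def sum_distrib_left algebra_simps)
  qed
  define y where "y l = (\<Sum>p<3. x p * W l p)" for l
  have "bil (\<lambda>p q. -2 * \<i> * K {p, q+3}) x x = bil (\<lambda>p q. \<Sum>l<3. W l p * cnj (W l q)) x x"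
    unfolding bil_def using Kv by (intro sum.cong refl) simp
  also have "\<dots> = (\<Sum>l<3. y l * cnj (y l))" unfolding bil_gram y_def ..
  finally have B: "bil (\<lambda>p q. -2 * \<i> * K {p, q+3}) x x = (\<Sum>l<3. y l * cnj (y l))" .
  have ex: "\<exists>l<3. y l \<noteq> 0"
  proof (rule ccontr)
    assume "\<not> ?thesis"
    then have "\<forall>l<3. (\<Sum>p<3. W l p * x p) = 0" unfolding y_def by (simp add: mult.commute)
    then obtain c where c: "\<forall>p<3. (\<Sum>l<3. c l * W l p) = 0" "\<exists>l<3. c l \<noteq> 0"
      using linalg3 x by blast
    have "form_sum (\<lambda>l. form_smult (c l) (w l)) {..<3} = form_zero"
    proof
      fix S
      show "form_sum (\<lambda>l. form_smult (c l) (w l)) {..<3} S = form_zero S"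
      proof (cases "\<exists>p<3. S = {p}")
        case True
        then obtain p where "p < 3" "S = {p}" by blast
        then show ?thesis using c(1) unfolding form_sum_def form_smult_def form_zero_def W_def by simp
      next
        case False
        then have "w l S = 0" if "l < 3" for l using shape10[OF w10[rule_format, OF that]] by blast
        then show ?thesis unfolding form_sum_def form_smult_def form_zero_def by simp
      qed
    qed
    then show False using ind c(2) by blast
  qed
  then obtain l0 where l0: "l0 < 3" "y l0 \<noteq> 0" by blast
  have r: "Re (y l * cnj (y l)) = cmod (y l) ^ 2" for l
    using complex_norm_square[of "y l"] by (metis Re_complex_of_real)
  have "0 < (\<Sum>l<3. cmod (y l) ^ 2)"
    by (rule sum_pos2[of _ l0]) (use l0 in simp_all)
  then have "0 < (\<Sum>l<3. Re (y l * cnj (y l)))" by (simp only: r)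
  then show ?thesis unfolding B Re_sum .
qed

theorem mainTheorem7:
  fixes M :: "nat \<Rightarrow> nat \<Rightarrow> form"
  assumes "\<forall>i<2. \<forall>j<2. is_pq 1 1 (M i j)"
    and "griffiths_positive M"
  shows "\<forall>a. is_pq 1 0 a \<and> a \<noteq> form_zero \<longrightarrow>
           Im (hermQ (det2 M) a a) = 0 \<and> Re (hermQ (det2 M) a a) > 0"
proof (intro allI impI)
  fix a assume "is_pq 1 0 a \<and> a \<noteq> form_zero"
  then have a10: "is_pq 1 0 a" and anz: "a \<noteq> form_zero" by auto
  have spa: "sp 1 0 a" using a10 by (rule sp_is_pq)
  have spM: "sp 1 1 (M i j)" if "i < 2" "j < 2" for i j using assms(1) that sp_is_pq by blast
  define al where "al p = a {p}" for p
  have al: "\<exists>p<3. al p \<noteq> 0"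
  proof -
    obtain S where "a S \<noteq> 0" using anz unfolding form_zero_def by (metis ext)
    then obtain p where "p < 3" "S = {p}" using shape10[OF a10] by blast
    then show ?thesis using \<open>a S \<noteq> 0\<close> unfolding al_def by blast
  qed
  define h where "h i j p q = -2 * \<i> * cf (M i j) p q" for i j p q
  have cfh: "cf (M i j) = (\<lambda>p q. \<i>/2 * h i j p q)" for i j
    by (simp add: h_def fun_eq_iff)
  let ?U = "\<lambda>x y. al x * cnj (al y)"
  have Q: "hermQ (det2 M) a a = 2 * (Tu ?U (h 0 0) (h 1 1) - Tu ?U (h 0 1) (h 1 0))"
  proof -
    have "hermQ (det2 M) a a = 8 * (Tu ?U (cf (M 0 1)) (cf (M 1 0)) - Tu ?U (cf (M 0 0)) (cf (M 1 1)))"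
      using hermQ_formula[OF spa spM] unfolding al_def by simp
    also have "\<dots> = 2 * (Tu ?U (h 0 0) (h 1 1) - Tu ?U (h 0 1) (h 1 0))"
      unfolding cfh Tu_scale by (simp add: algebra_simps)
    finally show ?thesis .
  qed
  have gp: "\<forall>i<2. \<forall>j<2. M i j = conj_form (M j i)" using assms(2) unfolding griffiths_positive_def by blast
  have herm: "\<forall>p<3. \<forall>q<3. h i j p q = cnj (h j i q p)" if "i < 2" "j < 2" for i j
  proof (intro allI impI)
    fix p q :: nat assume pq: "p < 3" "q < 3"
    have mij: "M i j = conj_form (M j i)" using gp that by blast
    have "cf (M i j) p q = conj_form (M j i) {p, q+3}" unfolding cf_def by (subst mij) (rule refl)
    also have "\<dots> = - cnj (cf (M j i) q p)" unfolding cf_def by (rule conj_two[OF pq])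
    finally have "cf (M i j) p q = - cnj (cf (M j i) q p)" .
    then show "h i j p q = cnj (h j i q p)" unfolding h_def by simp
  qed
  have G: "0 < Re (bil (\<lambda>p q. \<Sum>i<2. \<Sum>j<2. \<theta> i * cnj (\<theta> j) * h i j p q) x x)"
    if "\<theta> 0 \<noteq> 0 \<or> \<theta> 1 \<noteq> 0" "\<exists>p<3. x p \<noteq> 0" for \<theta> x
  proof -
    let ?K = "form_sum (\<lambda>i. form_sum (\<lambda>j. form_smult (\<theta> i * cnj (\<theta> j)) (M i j)) {..<2}) {..<2}"
    have "kahler ?K" using assms(2) that(1) unfolding griffiths_positive_def by blast
    then have "0 < Re (bil (\<lambda>p q. -2 * \<i> * ?K {p, q+3}) x x)" using that(2) by (rule kahler_pos)
    moreover have "(\<lambda>p q. -2 * \<i> * ?K {p, q+3}) = (\<lambda>p q. \<Sum>i<2. \<Sum>j<2. \<theta> i * cnj (\<theta> j) * h i j p q)"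
      unfolding form_sum_def form_smult_def h_def cf_def by (simp add: fun_eq_iff sum_distrib_left algebra_simps)
    ultimately show ?thesis by simp
  qed
  have "Im (Tu ?U (h 0 0) (h 1 1) - Tu ?U (h 0 1) (h 1 0)) = 0 \<and> 0 < Re (Tu ?U (h 0 0) (h 1 1) - Tu ?U (h 0 1) (h 1 0))"
    by (rule alg_main[OF herm G al]) auto
  then show "Im (hermQ (det2 M) a a) = 0 \<and> Re (hermQ (det2 M) a a) > 0" unfolding Q by simp
qed

end
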